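(* Let $G$ be a simple loopless graph on $[L]$ and $p\ge1$. The map $\Phi_p:\Pi_{2p}(G)\to\mathcal{P}_{2p}(G)$ is injective.
   Context: $\mathcal{T}(G)=\langle v\in[L]: uv=vu \text{ for } (u,v)\in E(G)\rangle$ is the trace monoid of $G$, $e$ the empty word. Words are adjacent, $w_1\leftrightarrow w_2$, if $w_1=vw_2$ or $w_2=vw_1$ for a letter $v$. $\mathcal{P}_{2p}(G)=\{w\in\mathcal{T}(G)^{2p}: e\leftrightarrow w_1\leftrightarrow\cdots\leftrightarrow w_{2p}=e\}$. $P_2(2p)$ is the set of pair partitions of $[2p]$; blocks $\{u_1,v_1\},\{u_2,v_2\}$ cross if $u_1<u_2<v_1<v_2$; $F_\pi$ is the graph on the blocks of $\pi$ with edges between crossing blocks. $\Pi_{2p}(G)=\{(\pi,\phi):\pi\in P_2(2p),\ \phi\in\operatorname{Hom}(F_\pi,G)\}$. Definition of $\Phi_p$ (it takes values in $\mathcal{P}_{2p}(G)$): (1) For $p=1$, if $\phi$ assigns label $i$ to the block $\{1,2\}$, $\Phi_1(\pi,\phi)=(i,e)$. (2) Given $\Phi_p$ and $(\pi,\phi)\in\Pi_{2(p+1)}(G)$, let $r$ be the smallest index that is the larger element of its block, $U=\{s,r\}\in\pi$ with $s<r$, $i_s=\phi(U)$, $\sigma=\pi\setminus\{U\}$, $\psi=\phi|_\sigma$. Identify $P_2([2(p+1)]\setminus\{s,r\})$ with $P_2(2p)$ via the order-preserving bijection, write $u=\Phi_p(\sigma,\psi)=(u_k)_{k\in[2(p+1)]\setminus\{s,r\}}$,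 and let $u_{k^-}$ be $u_j$ for the largest $j<k$, $j\notin\{s,r\}$, or $e$ if none exists. Then $\Phi_{p+1}(\pi,\phi)_k=u_k$ for $k<s$; $i_su_{s^-}$ for $k=s$; $i_su_k$ for $s<k<r$; $u_{r^-}$ for $k=r$; $u_k$ for $k>r$. *)

theory Defs
  imports Main "HOL-Library.FuncSet" "HOL-Library.Disjoint_Sets"
begin

text \<open>Trace monoid T(G): words (nat lists) modulo commutation of letters u v with E u v.
  A trace is represented by its equivalence class (a set of words).\<close>

definition swap1 :: "(nat \<Rightarrow> nat \<Rightarrow> bool) \<Rightarrow> nat list \<Rightarrow> nat list \<Rightarrow> bool" where
  "swap1 E x y \<longleftrightarrow> (\<exists>xs ys a b. E a b \<and> x = xs @ a # b # ys \<and> y = xs @ b # a # ys)"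

definition trace_eq :: "(nat \<Rightarrow> nat \<Rightarrow> bool) \<Rightarrow> nat list \<Rightarrow> nat list \<Rightarrow> bool" where
  "trace_eq E = equivclp (swap1 E)"

definition tr :: "(nat \<Rightarrow> nat \<Rightarrow> bool) \<Rightarrow> nat list \<Rightarrow> nat list set" where
  "tr E w = {w'. trace_eq E w w'}"

definition lmul :: "(nat \<Rightarrow> nat \<Rightarrow> bool) \<Rightarrow> nat \<Rightarrow> nat list set \<Rightarrow> nat list set" where
  "lmul E v t = (\<Union>w\<in>t. tr E (v # w))"

definition simple_graph_on :: "nat \<Rightarrow> (nat \<Rightarrow> nat \<Rightarrow> bool) \<Rightarrow> bool" where
  "simple_graph_on L E \<longleftrightarrow>
     (\<forall>u v. E u v \<longrightarrow> u \<in> {1..L} \<and> v \<in> {1..L}) \<and>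
     (\<forall>u v. E u v \<longrightarrow> E v u) \<and> (\<forall>u. \<not> E u u)"

definition pair_partitions :: "nat \<Rightarrow> nat set set set" where
  "pair_partitions n = {\<pi>. partition_on {1..n} \<pi> \<and> (\<forall>B\<in>\<pi>. card B = 2)}"

definition crosses :: "nat set \<Rightarrow> nat set \<Rightarrow> bool" where
  "crosses B C \<longleftrightarrow> (\<exists>u1 v1 u2 v2. B = {u1, v1} \<and> C = {u2, v2} \<and> u1 < u2 \<and> u2 < v1 \<and> v1 < v2)"

definition F_edge :: "nat set \<Rightarrow> nat set \<Rightarrow> bool" where
  "F_edge B C \<longleftrightarrow> crosses B C \<or> crosses C B"

text \<open>Hom(F_pi, G): maps from the blocks of pi to the vertices [L] of G sending
  edges of F_pi to edges of G (extensional, so that phi is determined by its values on pi)\<close>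
definition graph_homs :: "nat \<Rightarrow> (nat \<Rightarrow> nat \<Rightarrow> bool) \<Rightarrow> nat set set \<Rightarrow> (nat set \<Rightarrow> nat) set" where
  "graph_homs L E \<pi> = {\<phi>. \<phi> \<in> \<pi> \<rightarrow>\<^sub>E {1..L} \<and> (\<forall>B\<in>\<pi>. \<forall>C\<in>\<pi>. F_edge B C \<longrightarrow> E (\<phi> B) (\<phi> C))}"

definition Pi2p :: "nat \<Rightarrow> (nat \<Rightarrow> nat \<Rightarrow> bool) \<Rightarrow> nat \<Rightarrow> (nat set set \<times> (nat set \<Rightarrow> nat)) set" where
  "Pi2p L E p = {(\<pi>, \<phi>). \<pi> \<in> pair_partitions (2 * p) \<and> \<phi> \<in> graph_homs L E \<pi>}"

text \<open>Phi_p(pi, phi) as the function k \<mapsto> w_k (k in {1..2p}).  In the recursive step,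
  f is the order-preserving bijection [2(p+1)] - {s,r} -> [2p] and finv its inverse.\<close>
fun PhiF :: "(nat \<Rightarrow> nat \<Rightarrow> bool) \<Rightarrow> nat \<Rightarrow> nat set set \<Rightarrow> (nat set \<Rightarrow> nat) \<Rightarrow> nat \<Rightarrow> nat list set" where
  "PhiF E 0 \<pi> \<phi> = (\<lambda>k. tr E [])"
| "PhiF E (Suc 0) \<pi> \<phi> = (\<lambda>k. if k = 1 then tr E [\<phi> {1, 2}] else tr E [])"
| "PhiF E (Suc (Suc p)) \<pi> \<phi> =
    (let r = (LEAST r. \<exists>s. s < r \<and> {s, r} \<in> \<pi>);
         s = (THE s. s < r \<and> {s, r} \<in> \<pi>);
         i = \<phi> {s, r};
         f = (\<lambda>k. if k < s then k else if k < r then k - 1 else k - 2);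
         finv = (\<lambda>j. if j < s then j else if j + 1 < r then j + 1 else j + 2);
         \<sigma> = (\<lambda>B. f ` B) ` (\<pi> - {{s, r}});
         \<psi> = (\<lambda>B. \<phi> (finv ` B));
         u' = PhiF E (Suc p) \<sigma> \<psi>;
         u = (\<lambda>k. u' (f k));
         uprev = (\<lambda>k. if \<exists>j. 1 \<le> j \<and> j < k \<and> j \<notin> {s, r}
                      then u (GREATEST j. 1 \<le> j \<and> j < k \<and> j \<notin> {s, r})
                      else tr E [])
     in (\<lambda>k. if k < s then u k
             else if k = s then lmul E i (uprev s)
             else if k < r then lmul E i (u k)
             else if k = r then uprev r
             else u k))"

definition Phi :: "(nat \<Rightarrow> nat \<Rightarrow> bool) \<Rightarrow> nat \<Rightarrow> nat set set \<times> (nat set \<Rightarrow> nat) \<Rightarrow> nat list set list" where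
  "Phi E p x = map (PhiF E p (fst x) (snd x)) [1..<2 * p + 1]"

end

theory Submission
  imports Defs "HOL-Library.Multiset"
begin

section \<open>Trace facts\<close>

lemma trace_eq_mset:
  assumes "trace_eq E x y" shows "mset x = mset y"
  using assms unfolding trace_eq_def
proof (induction rule: equivclp_induct)
  case base then show ?case by simp
next
  case (step y z)
  have "mset y = mset z"
    using step(2) unfolding swap1_def by (auto simp: add_mset_commute)
  then show ?case using step(3) by simp
qed

lemma tr_eq_mset:
  assumes "tr E w = tr E w'" shows "mset w = mset w'"
proof -
  have "w' \<in> tr E w'" by (simp add: tr_def trace_eq_def)
  then have "w' \<in> tr E w" using assms by simp
  then have "trace_eq E w w'" by (simp add: tr_def)
  then show ?thesis by (rule trace_eq_mset)
qed

lemma trace_eq_cons: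
  assumes "trace_eq E x y" shows "trace_eq E (i # x) (i # y)"
  using assms unfolding trace_eq_def
proof (induction rule: equivclp_induct)
  case base then show ?case by simp
next
  case (step y z)
  have "swap1 E (i # y) (i # z) \<or> swap1 E (i # z) (i # y)"
    using step(2) unfolding swap1_def by (metis append_Cons)
  then show ?case using step(3) equivclp_into_equivclp by metis
qed

lemma lmul_tr: "lmul E i (tr E w) = tr E (i # w)"
proof
  show "lmul E i (tr E w) \<subseteq> tr E (i # w)"
  proof
    fix v assume "v \<in> lmul E i (tr E w)"
    then obtain w' where "trace_eq E w w'" "trace_eq E (i # w') v"
      by (auto simp: lmul_def tr_def)
    then show "v \<in> tr E (i # w)"
      using trace_eq_cons[of E w w' i] unfolding tr_def trace_eq_def
      by (auto intro: equivclp_trans)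
  qed
next
  have "w \<in> tr E w" by (simp add: tr_def trace_eq_def)
  then show "tr E (i # w) \<subseteq> lmul E i (tr E w)" by (auto simp: lmul_def)
qed

section \<open>Pair partitions\<close>

lemma pp_block:
  assumes "\<pi> \<in> pair_partitions n" "B \<in> \<pi>"
  shows "\<exists>a b. B = {a, b} \<and> a < b \<and> 1 \<le> a \<and> b \<le> n"
proof -
  have c: "card B = 2" using assms by (simp add: pair_partitions_def)
  have sub: "B \<subseteq> {1..n}" using assms partition_onD1[of "{1..n}" \<pi>]
    by (auto simp: pair_partitions_def)
  from c obtain a b where "B = {a, b}" "a \<noteq> b" by (auto simp: card_2_iff)
  show ?thesis
  proof (cases "a < b")
    case True
    then show ?thesis using sub \<open>B = {a, b}\<close> by auto
  next
    case False
    then have "b < a" using \<open>a \<noteq> b\<close> by simp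
    moreover have "B = {b, a}" using \<open>B = {a, b}\<close> by auto
    ultimately show ?thesis using sub by auto
  qed
qed

lemma pp_unique:
  assumes "\<pi> \<in> pair_partitions n" "B \<in> \<pi>" "C \<in> \<pi>" "x \<in> B" "x \<in> C"
  shows "B = C"
proof (rule ccontr)
  assume "B \<noteq> C"
  have "disjoint \<pi>" using assms(1) partition_onD2 unfolding pair_partitions_def by blast
  then have "B \<inter> C = {}" using disjointD assms(2,3) \<open>B \<noteq> C\<close> by blast
  then show False using assms(4,5) by blast
qed

lemma pp_cover:
  assumes "\<pi> \<in> pair_partitions n" "x \<in> {1..n}"
  shows "\<exists>B\<in>\<pi>. x \<in> B"
  using assms partition_onD1[of "{1..n}" \<pi>] unfolding pair_partitions_def by auto

lemma pp_finite:
  assumes "\<pi> \<in> pair_partitions n" shows "finite \<pi>"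
  using assms finite_elements[of "{1..n}" \<pi>] unfolding pair_partitions_def by auto

lemma pair_eq_less:
  assumes "{a, b} = {c, d}" "(a::nat) < b" "c < d" shows "a = c \<and> b = d"
  using assms by (metis doubleton_eq_iff not_less_iff_gr_or_eq)

definition open_at :: "nat set set \<Rightarrow> nat \<Rightarrow> nat set set" where
  "open_at \<pi> k = {B\<in>\<pi>. \<exists>x\<in>B. \<exists>y\<in>B. x \<le> k \<and> k < y}"

definition Mo :: "nat set set \<Rightarrow> (nat set \<Rightarrow> nat) \<Rightarrow> nat \<Rightarrow> nat multiset" where
  "Mo \<pi> \<phi> k = image_mset \<phi> (mset_set (open_at \<pi> k))"

lemma open_at_sub: "open_at P k \<subseteq> P" by (auto simp: open_at_def)

lemma open_at_shift:
  assumes "\<forall>B\<in>P. \<forall>x\<in>B. \<not> (j < x \<and> x \<le> k)" "j \<le> (k::nat)"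
  shows "open_at P j = open_at P k"
proof -
  have "(\<exists>x\<in>B. \<exists>y\<in>B. x \<le> j \<and> j < y) \<longleftrightarrow> (\<exists>x\<in>B. \<exists>y\<in>B. x \<le> k \<and> k < y)"
    if "B \<in> P" for B
    using assms that by (meson le_trans not_le)
  then show ?thesis unfolding open_at_def by auto
qed

lemma open_at_none:
  assumes "\<forall>B\<in>P. \<forall>x\<in>B. k < (x::nat)"
  shows "open_at P k = {}"
  using assms unfolding open_at_def by fastforce

lemma pp_two:
  assumes "\<pi> \<in> pair_partitions 2" shows "\<pi> = {{1, 2}}"
proof -
  have all: "C = {1, 2}" if C: "C \<in> \<pi>" for C
  proof -
    obtain a b where "C = {a, b}" "a < b" "1 \<le> a" "b \<le> 2" using pp_block[OF assms C] by blast
    then have "a = 1" "b = 2" by auto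
    then show ?thesis using \<open>C = {a, b}\<close> by simp
  qed
  obtain B where "B \<in> \<pi>" using pp_cover[OF assms, of 1] by auto
  then show ?thesis using all by blast
qed

lemma image_Collect_helper: "{y \<in> g ` P. Q y} = g ` {x \<in> P. Q (g x)}"
  by blast

lemma PhiF_mset:
  assumes "\<pi> \<in> pair_partitions (2 * Suc q)" "1 \<le> k" "k \<le> 2 * Suc q"
  shows "\<exists>w. PhiF E (Suc q) \<pi> \<phi> k = tr E w \<and> mset w = Mo \<pi> \<phi> k"
  using assms
proof (induction q arbitrary: \<pi> \<phi> k)
  case 0
  then have pi: "\<pi> = {{1, 2}}" using pp_two by simp
  have o1: "open_at {{1::nat, 2}} 1 = {{1, 2}}" unfolding open_at_def by auto
  have o2: "open_at {{1::nat, 2}} 2 = {}" unfolding open_at_def by auto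
  show ?case
  proof (cases "k = 1")
    case True
    then show ?thesis using pi o1 by (auto simp: Mo_def intro!: exI[of _ "[\<phi> {1,2}]"])
  next
    case False
    then have "k = 2" using 0 by simp
    then show ?thesis using pi o2 by (auto simp: Mo_def intro!: exI[of _ "[]"])
  qed
next
  case (Suc q)
  define n where "n = 2 * Suc (Suc q)"
  have pp: "\<pi> \<in> pair_partitions n" using Suc.prems n_def by simp
  have kn: "1 \<le> k" "k \<le> n" using Suc.prems n_def by auto
  define r where "r = (LEAST r. \<exists>s. s < r \<and> {s, r} \<in> \<pi>)"
  define s where "s = (THE s. s < r \<and> {s, r} \<in> \<pi>)"
  define i where "i = \<phi> {s, r}"
  define f where "f = (\<lambda>k::nat. if k < s then k else if k < r then k - 1 else k - 2)"
  define finv where "finv = (\<lambda>j::nat. if j < s then j else if j + 1 < r then j + 1 else j + 2)"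
  define \<sigma> where "\<sigma> = (\<lambda>B. f ` B) ` (\<pi> - {{s, r}})"
  define \<psi> where "\<psi> = (\<lambda>B. \<phi> (finv ` B))"
  define u' where "u' = PhiF E (Suc q) \<sigma> \<psi>"
  define u where "u = (\<lambda>k. u' (f k))"
  define uprev where "uprev = (\<lambda>k. if \<exists>j. 1 \<le> j \<and> j < k \<and> j \<notin> {s, r}
                      then u (GREATEST j. 1 \<le> j \<and> j < k \<and> j \<notin> {s, r})
                      else tr E [])"
  have PhiF_eq: "PhiF E (Suc (Suc q)) \<pi> \<phi> = (\<lambda>k. if k < s then u k
             else if k = s then lmul E i (uprev s)
             else if k < r then lmul E i (u k)
             else if k = r then uprev r
             else u k)"
    unfolding PhiF.simps Let_def r_def s_def i_def f_def finv_def \<sigma>_def \<psi>_def u'_def u_def uprev_def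
    by (rule refl)
  have exr: "\<exists>s. s < r \<and> {s, r} \<in> \<pi>"
  proof -
    obtain B where "B \<in> \<pi>" using pp_cover[OF pp, of 1] n_def by auto
    then obtain a b where "B = {a, b}" "a < b" using pp_block[OF pp] by blast
    then have "\<exists>s. s < b \<and> {s, b} \<in> \<pi>" using \<open>B \<in> \<pi>\<close> by blast
    then show ?thesis unfolding r_def by (rule LeastI[where P = "\<lambda>r. \<exists>s<r. {s, r} \<in> \<pi>"])
  qed
  have sr: "s < r" "{s, r} \<in> \<pi>"
  proof -
    obtain s0 where s0: "s0 < r" "{s0, r} \<in> \<pi>" using exr by blast
    have "s = s0" unfolding s_def
    proof (rule the_equality)
      show "s0 < r \<and> {s0, r} \<in> \<pi>" using s0 by simp
      fix t assume t: "t < r \<and> {t, r} \<in> \<pi>"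
      then have "{t, r} = {s0, r}" using pp_unique[OF pp, of "{t, r}" "{s0, r}" r] s0 by auto
      then show "t = s0" using pair_eq_less t s0 by blast
    qed
    then show "s < r" "{s, r} \<in> \<pi>" using s0 by auto
  qed
  have s1: "1 \<le> s" and rn: "r \<le> n"
    using pp_block[OF pp sr(2)] sr(1) pair_eq_less by blast+
  define C where "C = {1..n} - {s, r}"
  define \<pi>m where "\<pi>m = \<pi> - {{s, r}}"
  have \<sigma>_eq: "\<sigma> = (\<lambda>B. f ` B) ` \<pi>m" unfolding \<sigma>_def \<pi>m_def by simp
  have fin: "finite \<pi>" using pp_finite[OF pp] .
  have finm: "finite \<pi>m" using fin \<pi>m_def by simp
  have blockC: "B \<subseteq> C" if "B \<in> \<pi>m" for B
  proof -
    have B: "B \<in> \<pi>" "B \<noteq> {s, r}" using that \<pi>m_def by auto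
    have "B \<subseteq> {1..n}" using pp_block[OF pp B(1)] by auto
    moreover have "s \<notin> B" "r \<notin> B" using pp_unique[OF pp B(1) sr(2)] B(2) by auto
    ultimately show ?thesis unfolding C_def by auto
  qed
  have f_mono: "f x \<le> f y \<longleftrightarrow> x \<le> y" if "x \<in> C" "y \<in> C" for x y
    using that sr(1) unfolding C_def f_def by auto
  have f_less: "f x < f y \<longleftrightarrow> x < y" if "x \<in> C" "y \<in> C" for x y
    using f_mono[OF that] f_mono[OF that(2,1)] by auto
  have finv_f: "finv (f x) = x" if "x \<in> C" for x
    using that sr(1) unfolding C_def f_def finv_def by auto
  have f_range: "f x \<in> {1..2 * Suc q}" if "x \<in> C" for x
    using that sr(1) s1 rn unfolding C_def f_def n_def by auto
  have finv_range: "finv j \<in> C \<and> f (finv j) = j" if "j \<in> {1..2 * Suc q}" for j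
    using that sr(1) s1 rn unfolding C_def f_def finv_def n_def by auto
  have fC: "f ` C = {1..2 * Suc q}"
    using f_range finv_range by force
  have injf: "inj_on f C"
    by (metis finv_f inj_onI)
  have part: "partition_on {1..n} \<pi>" using pp unfolding pair_partitions_def by simp
  have pim_part: "partition_on C \<pi>m"
  proof -
    have "\<pi> = insert {s, r} \<pi>m" using sr(2) \<pi>m_def by auto
    moreover have "disjnt {s, r} (\<Union>\<pi>m)" using blockC unfolding C_def disjnt_def by blast
    ultimately have "partition_on ({1..n} - {s, r}) \<pi>m"
      using part partition_on_insert by metis
    then show ?thesis unfolding C_def .
  qed
  have \<sigma>_pp: "\<sigma> \<in> pair_partitions (2 * Suc q)"
  proof -
    have "partition_on (f ` C) ((`) f ` \<pi>m - {{}})"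
      using partition_on_inj_image[OF pim_part injf] .
    moreover have "{} \<notin> (`) f ` \<pi>m" using partition_onD3[OF pim_part] by auto
    ultimately have "partition_on {1..2 * Suc q} \<sigma>" using fC \<sigma>_eq by simp
    moreover have "card B' = 2" if B': "B' \<in> \<sigma>" for B'
    proof -
      obtain B where B: "B \<in> \<pi>m" "B' = f ` B" using B' \<sigma>_eq by auto
      have "card B = 2" using B(1) pp \<pi>m_def unfolding pair_partitions_def by auto
      moreover have "inj_on f B" using injf blockC[OF B(1)] inj_on_subset by blast
      ultimately show ?thesis using B(2) card_image by metis
    qed
    ultimately show ?thesis unfolding pair_partitions_def by simp
  qed
  have open_\<sigma>: "open_at \<sigma> (f x) = (\<lambda>B. f ` B) ` open_at \<pi>m x" if x: "x \<in> C" for x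
  proof -
    have iff: "(\<exists>a\<in>f ` B. \<exists>b\<in>f ` B. a \<le> f x \<and> f x < b) \<longleftrightarrow> (\<exists>a\<in>B. \<exists>b\<in>B. a \<le> x \<and> x < b)"
      if B: "B \<in> \<pi>m" for B
    proof -
      have h1: "\<forall>a\<in>B. f a \<le> f x \<longleftrightarrow> a \<le> x" using f_mono blockC[OF B] x by blast
      have h2: "\<forall>b\<in>B. f x < f b \<longleftrightarrow> x < b" using f_less blockC[OF B] x by blast
      show ?thesis
      proof
        assume "\<exists>a\<in>f ` B. \<exists>b\<in>f ` B. a \<le> f x \<and> f x < b"
        then obtain a b where "a \<in> B" "b \<in> B" "f a \<le> f x" "f x < f b" by blast
        then show "\<exists>a\<in>B. \<exists>b\<in>B. a \<le> x \<and> x < b" using h1 h2 by blast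
      next
        assume "\<exists>a\<in>B. \<exists>b\<in>B. a \<le> x \<and> x < b"
        then obtain a b where "a \<in> B" "b \<in> B" "a \<le> x" "x < b" by blast
        then have "f a \<le> f x" "f x < f b" using h1 h2 by blast+
        then show "\<exists>a\<in>f ` B. \<exists>b\<in>f ` B. a \<le> f x \<and> f x < b"
          using \<open>a \<in> B\<close> \<open>b \<in> B\<close> by blast
      qed
    qed
    have "open_at \<sigma> (f x) = (\<lambda>B. f ` B) ` {B \<in> \<pi>m. \<exists>a\<in>f ` B. \<exists>b\<in>f ` B. a \<le> f x \<and> f x < b}"
      unfolding open_at_def \<sigma>_eq by (rule image_Collect_helper)
    also have "{B \<in> \<pi>m. \<exists>a\<in>f ` B. \<exists>b\<in>f ` B. a \<le> f x \<and> f x < b} = open_at \<pi>m x"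
      unfolding open_at_def using iff by blast
    finally show ?thesis .
  qed
  have Mo_\<sigma>: "Mo \<sigma> \<psi> (f x) = Mo \<pi>m \<phi> x" if x: "x \<in> C" for x
  proof -
    have inj: "inj_on (\<lambda>B. f ` B) (open_at \<pi>m x)"
    proof (rule inj_onI)
      fix B1 B2 assume "B1 \<in> open_at \<pi>m x" "B2 \<in> open_at \<pi>m x" "f ` B1 = f ` B2"
      then show "B1 = B2" using blockC open_at_sub injf inj_on_image_eq_iff by (metis subsetD)
    qed
    have psi: "\<psi> (f ` B) = \<phi> B" if "B \<in> open_at \<pi>m x" for B
    proof -
      have BC: "B \<subseteq> C" using blockC open_at_sub that by blast
      have "finv ` f ` B = (\<lambda>x. x) ` B" unfolding image_image
        by (rule image_cong) (use BC finv_f in auto)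
      then have "finv ` f ` B = B" by simp
      then show ?thesis unfolding \<psi>_def by simp
    qed
    have "Mo \<sigma> \<psi> (f x) = image_mset \<psi> (image_mset (\<lambda>B. f ` B) (mset_set (open_at \<pi>m x)))"
      unfolding Mo_def open_\<sigma>[OF x] image_mset_mset_set[OF inj] ..
    also have "\<dots> = image_mset (\<lambda>B. \<psi> (f ` B)) (mset_set (open_at \<pi>m x))"
      by (simp add: multiset.map_comp comp_def)
    also have "\<dots> = Mo \<pi>m \<phi> x" unfolding Mo_def
      by (rule image_mset_cong) (use psi finite_subset[OF open_at_sub finm] in \<open>auto\<close>)
    finally show ?thesis .
  qed
  have open_\<pi>: "open_at \<pi> x = open_at \<pi>m x \<union> (if s \<le> x \<and> x < r then {{s, r}} else {})" for x
    using sr unfolding open_at_def \<pi>m_def by auto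
  have Mo_\<pi>: "Mo \<pi> \<phi> x = (if s \<le> x \<and> x < r then add_mset i (Mo \<pi>m \<phi> x) else Mo \<pi>m \<phi> x)" for x
  proof -
    have "{s, r} \<notin> open_at \<pi>m x" using open_at_sub \<pi>m_def by blast
    moreover have "finite (open_at \<pi>m x)" using finm open_at_sub finite_subset by blast
    ultimately show ?thesis unfolding Mo_def open_\<pi> i_def by auto
  qed
  have u_C: "\<exists>w. u x = tr E w \<and> mset w = Mo \<pi>m \<phi> x" if x: "x \<in> C" for x
  proof -
    have "f x \<in> {1..2 * Suc q}" using f_range[OF x] .
    then obtain w where "u' (f x) = tr E w" "mset w = Mo \<sigma> \<psi> (f x)"
      using Suc.IH[OF \<sigma>_pp] unfolding u'_def by force
    then show ?thesis using Mo_\<sigma>[OF x] unfolding u_def by auto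
  qed
  have uprev_ok: "\<exists>w. uprev x = tr E w \<and> mset w = Mo \<pi>m \<phi> x" if x: "x \<in> {s, r}" for x
  proof (cases "\<exists>j. 1 \<le> j \<and> j < x \<and> j \<notin> {s, r}")
    case True
    define P where "P = (\<lambda>j. 1 \<le> j \<and> j < x \<and> j \<notin> {s, r})"
    define G where "G = Greatest P"
    obtain j0 where "P j0" using True P_def by blast
    have bound: "\<And>y. P y \<Longrightarrow> y \<le> x" unfolding P_def by simp
    have PG: "P G" unfolding G_def using GreatestI_nat[where P=P, OF \<open>P j0\<close> bound] .
    have Gmax: "y \<le> G" if "P y" for y unfolding G_def using Greatest_le_nat[where P=P, OF that bound] .
    have GC: "G \<in> C" using PG x rn sr(1) unfolding P_def C_def by auto
    have up: "uprev x = u G" unfolding uprev_def G_def P_def using True by simp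
    obtain w where w: "u G = tr E w" "mset w = Mo \<pi>m \<phi> G" using u_C[OF GC] by blast
    have "open_at \<pi>m G = open_at \<pi>m x"
    proof (rule open_at_shift)
      show "\<forall>B\<in>\<pi>m. \<forall>y\<in>B. \<not> (G < y \<and> y \<le> x)"
      proof (intro ballI notI)
        fix B y assume B: "B \<in> \<pi>m" "y \<in> B" "G < y \<and> y \<le> x"
        have "y \<in> C" using blockC B by blast
        then have "P y" using B(3) x unfolding P_def C_def by auto
        then show False using Gmax B(3) by fastforce
      qed
      show "G \<le> x" using PG unfolding P_def by simp
    qed
    then show ?thesis using up w unfolding Mo_def by auto
  next
    case False
    have "open_at \<pi>m x = {}"
    proof (rule open_at_none, intro ballI)
      fix B y assume B: "B \<in> \<pi>m" "y \<in> B"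
      have "y \<in> C" using blockC B by blast
      moreover have "\<not> (1 \<le> y \<and> y < x \<and> y \<notin> {s, r})" using False by blast
      ultimately show "x < y" using x unfolding C_def by auto
    qed
    then show ?thesis using False unfolding uprev_def Mo_def by (auto intro!: exI[of _ "[]"])
  qed
  have kC: "k \<in> C" if "k \<noteq> s" "k \<noteq> r" using that kn unfolding C_def by auto
  show ?case
  proof -
    consider "k < s" | "k = s" | "s < k \<and> k < r" | "k = r" | "r < k" by linarith
    then show ?thesis
    proof cases
      case 1
      then show ?thesis using u_C[OF kC] Mo_\<pi>[of k] PhiF_eq sr(1) by auto
    next
      case 2
      obtain w where "uprev s = tr E w" "mset w = Mo \<pi>m \<phi> s" using uprev_ok by blast
      then show ?thesis using 2 Mo_\<pi>[of k] PhiF_eq sr(1) lmul_tr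
        by (auto intro!: exI[of _ "i # w"])
    next
      case 3
      obtain w where "u k = tr E w" "mset w = Mo \<pi>m \<phi> k" using u_C[OF kC] 3 by auto
      then show ?thesis using 3 Mo_\<pi>[of k] PhiF_eq sr(1) lmul_tr
        by (auto intro!: exI[of _ "i # w"])
    next
      case 4
      then show ?thesis using uprev_ok[of r] Mo_\<pi>[of k] PhiF_eq sr(1) by auto
    next
      case 5
      then show ?thesis using u_C[OF kC] Mo_\<pi>[of k] PhiF_eq sr(1) by auto
    qed
  qed
qed


lemma open_at_zero:
  assumes "\<pi> \<in> pair_partitions n" shows "open_at \<pi> 0 = {}"
proof (rule open_at_none, intro ballI)
  fix B x assume "B \<in> \<pi>" "x \<in> B"
  then show "0 < x" using pp_block[OF assms] by fastforce
qed

lemma open_iff_other: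
  fixes k :: nat
  assumes "1 \<le> k" "k \<notin> B"
  shows "(\<exists>x\<in>B. \<exists>y\<in>B. x \<le> k \<and> k < y) \<longleftrightarrow> (\<exists>x\<in>B. \<exists>y\<in>B. x \<le> k - 1 \<and> k - 1 < y)"
proof -
  have "\<forall>x\<in>B. (x \<le> k \<longleftrightarrow> x \<le> k - 1) \<and> (k < x \<longleftrightarrow> k - 1 < x)"
  proof
    fix x assume "x \<in> B"
    then have "x \<noteq> k" using assms(2) by auto
    then show "(x \<le> k \<longleftrightarrow> x \<le> k - 1) \<and> (k < x \<longleftrightarrow> k - 1 < x)" using assms(1) by arith
  qed
  then show ?thesis by blast
qed

lemma Mo_opener:
  assumes pp: "\<pi> \<in> pair_partitions n" and kb: "{k, b} \<in> \<pi>" "k < b"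
  shows "Mo \<pi> \<phi> k = add_mset (\<phi> {k, b}) (Mo \<pi> \<phi> (k - 1))"
proof -
  have k1: "1 \<le> k" using pp_block[OF pp kb(1)] kb(2) pair_eq_less by blast
  have "open_at \<pi> k = insert {k, b} (open_at \<pi> (k - 1))"
  proof -
    have "B \<in> open_at \<pi> k \<longleftrightarrow> B \<in> open_at \<pi> (k - 1)" if "B \<in> \<pi>" "B \<noteq> {k, b}" for B
    proof -
      have "k \<notin> B" using pp_unique[OF pp that(1) kb(1), of k] that(2) by auto
      then show ?thesis using open_iff_other[OF k1] that(1) unfolding open_at_def by auto
    qed
    moreover have "{k, b} \<in> open_at \<pi> k" using kb unfolding open_at_def by auto
    ultimately show ?thesis using open_at_sub by blast
  qed
  moreover have "{k, b} \<notin> open_at \<pi> (k - 1)" using k1 kb(2) unfolding open_at_def by auto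
  moreover have "finite (open_at \<pi> (k - 1))" using finite_subset[OF open_at_sub pp_finite[OF pp]] .
  ultimately show ?thesis unfolding Mo_def by simp
qed

lemma Mo_closer:
  assumes pp: "\<pi> \<in> pair_partitions n" and ak: "{a, k} \<in> \<pi>" "a < k"
  shows "Mo \<pi> \<phi> (k - 1) = add_mset (\<phi> {a, k}) (Mo \<pi> \<phi> k)"
proof -
  have k1: "1 \<le> k" using ak(2) by simp
  have "open_at \<pi> (k - 1) = insert {a, k} (open_at \<pi> k)"
  proof -
    have "B \<in> open_at \<pi> k \<longleftrightarrow> B \<in> open_at \<pi> (k - 1)" if "B \<in> \<pi>" "B \<noteq> {a, k}" for B
    proof -
      have "k \<notin> B" using pp_unique[OF pp that(1) ak(1), of k] that(2) by auto
      then show ?thesis using open_iff_other[OF k1] that(1) unfolding open_at_def by auto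
    qed
    moreover have "{a, k} \<in> open_at \<pi> (k - 1)" using ak unfolding open_at_def by auto
    ultimately show ?thesis using open_at_sub by blast
  qed
  moreover have "{a, k} \<notin> open_at \<pi> k" using ak(2) unfolding open_at_def by auto
  moreover have "finite (open_at \<pi> k)" using finite_subset[OF open_at_sub pp_finite[OF pp]] .
  ultimately show ?thesis unfolding Mo_def by simp
qed

lemma label_open:
  assumes pp: "\<pi> \<in> pair_partitions n" and pp': "\<pi>' \<in> pair_partitions n"
    and eq: "\<And>j. j \<le> n \<Longrightarrow> Mo \<pi> \<phi> j = Mo \<pi>' \<phi>' j"
    and kb: "{k, b} \<in> \<pi>" "k < b"
  shows "\<exists>b'. {k, b'} \<in> \<pi>' \<and> k < b' \<and> \<phi>' {k, b'} = \<phi> {k, b}"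
proof -
  obtain a0 b0 where ab0: "{k, b} = {a0, b0}" "a0 < b0" "1 \<le> a0" "b0 \<le> n"
    using pp_block[OF pp kb(1)] by blast
  have "k = a0 \<and> b = b0" using pair_eq_less[OF ab0(1) kb(2) ab0(2)] .
  then have kn: "k \<in> {1..n}" "k \<le> n" using ab0 kb(2) by auto
  obtain B' where B': "B' \<in> \<pi>'" "k \<in> B'" using pp_cover[OF pp' kn(1)] by blast
  obtain x y where xy: "B' = {x, y}" "x < y" using pp_block[OF pp' B'(1)] by blast
  have M1: "Mo \<pi> \<phi> k = add_mset (\<phi> {k, b}) (Mo \<pi> \<phi> (k - 1))" using Mo_opener[OF pp kb] .
  have E1: "Mo \<pi> \<phi> k = Mo \<pi>' \<phi>' k" "Mo \<pi> \<phi> (k - 1) = Mo \<pi>' \<phi>' (k - 1)" using eq kn by auto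
  show ?thesis
  proof (cases "x = k")
    case True
    have "Mo \<pi>' \<phi>' k = add_mset (\<phi>' {k, y}) (Mo \<pi>' \<phi>' (k - 1))"
      using Mo_opener[OF pp', of k y] B'(1) xy True by simp
    then have "\<phi>' {k, y} = \<phi> {k, b}" using M1 E1 by simp
    then show ?thesis using B'(1) xy True by auto
  next
    case False
    then have "y = k" using B'(2) xy by auto
    then have "Mo \<pi>' \<phi>' (k - 1) = add_mset (\<phi>' {x, k}) (Mo \<pi>' \<phi>' k)"
      using Mo_closer[OF pp', of x k] B'(1) xy by simp
    then have "size (Mo \<pi> \<phi> (k - 1)) = size (Mo \<pi> \<phi> k) + 1" using E1 by simp
    moreover have "size (Mo \<pi> \<phi> k) = size (Mo \<pi> \<phi> (k - 1)) + 1" using M1 by simp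
    ultimately show ?thesis by simp
  qed
qed

lemma label_close:
  assumes pp: "\<pi> \<in> pair_partitions n" and pp': "\<pi>' \<in> pair_partitions n"
    and eq: "\<And>j. j \<le> n \<Longrightarrow> Mo \<pi> \<phi> j = Mo \<pi>' \<phi>' j"
    and ak: "{a, k} \<in> \<pi>" "a < k"
  shows "\<exists>a'. {a', k} \<in> \<pi>' \<and> a' < k \<and> \<phi>' {a', k} = \<phi> {a, k}"
proof -
  obtain a0 b0 where ab0: "{a, k} = {a0, b0}" "a0 < b0" "1 \<le> a0" "b0 \<le> n"
    using pp_block[OF pp ak(1)] by blast
  have "a = a0 \<and> k = b0" using pair_eq_less[OF ab0(1) ak(2) ab0(2)] .
  then have kn: "k \<in> {1..n}" "k \<le> n" using ab0 ak(2) by auto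
  obtain B' where B': "B' \<in> \<pi>'" "k \<in> B'" using pp_cover[OF pp' kn(1)] by blast
  obtain x y where xy: "B' = {x, y}" "x < y" using pp_block[OF pp' B'(1)] by blast
  have M1: "Mo \<pi> \<phi> (k - 1) = add_mset (\<phi> {a, k}) (Mo \<pi> \<phi> k)" using Mo_closer[OF pp ak] .
  have E1: "Mo \<pi> \<phi> k = Mo \<pi>' \<phi>' k" "Mo \<pi> \<phi> (k - 1) = Mo \<pi>' \<phi>' (k - 1)" using eq kn by auto
  show ?thesis
  proof (cases "y = k")
    case True
    have "Mo \<pi>' \<phi>' (k - 1) = add_mset (\<phi>' {x, k}) (Mo \<pi>' \<phi>' k)"
      using Mo_closer[OF pp', of x k] B'(1) xy True by simp
    then have "\<phi>' {x, k} = \<phi> {a, k}" using M1 E1 by simp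
    then show ?thesis using B'(1) xy True by auto
  next
    case False
    then have "x = k" using B'(2) xy by auto
    then have "Mo \<pi>' \<phi>' k = add_mset (\<phi>' {k, y}) (Mo \<pi>' \<phi>' (k - 1))"
      using Mo_opener[OF pp', of k y] B'(1) xy by simp
    then have "size (Mo \<pi> \<phi> k) = size (Mo \<pi> \<phi> (k - 1)) + 1" using E1 by simp
    moreover have "size (Mo \<pi> \<phi> (k - 1)) = size (Mo \<pi> \<phi> k) + 1" using M1 by simp
    ultimately show ?thesis by simp
  qed
qed


lemma hom_cross:
  assumes "\<phi> \<in> graph_homs L E \<pi>" "{u1, v1} \<in> \<pi>" "{u2, v2} \<in> \<pi>"
    "(u1::nat) < u2" "u2 < v1" "v1 < v2"
  shows "E (\<phi> {u1, v1}) (\<phi> {u2, v2})"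
proof -
  have "crosses {u1, v1} {u2, v2}" unfolding crosses_def using assms(4-6) by blast
  then have "F_edge {u1, v1} {u2, v2}" unfolding F_edge_def by simp
  then show ?thesis using assms(1-3) unfolding graph_homs_def by blast
qed

lemma decode_step:
  assumes simple: "\<forall>u. \<not> E u u"
    and pp: "\<pi> \<in> pair_partitions n" and pp': "\<pi>' \<in> pair_partitions n"
    and h: "\<phi> \<in> graph_homs L E \<pi>" and h': "\<phi>' \<in> graph_homs L E \<pi>'"
    and eq: "\<And>j. j \<le> n \<Longrightarrow> Mo \<pi> \<phi> j = Mo \<pi>' \<phi>' j"
    and IH: "\<And>d a. d < b \<Longrightarrow> a < d \<Longrightarrow> ({a, d} \<in> \<pi> \<longleftrightarrow> {a, d} \<in> \<pi>')"
    and ab: "{a, b} \<in> \<pi>" "a < b"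
  shows "{a, b} \<in> \<pi>'"
proof -
  have eq': "\<And>j. j \<le> n \<Longrightarrow> Mo \<pi>' \<phi>' j = Mo \<pi> \<phi> j" using eq by simp
  obtain a' where A': "{a', b} \<in> \<pi>'" "a' < b" "\<phi>' {a', b} = \<phi> {a, b}"
    using label_close[OF pp pp' eq ab] by blast
  consider "a' = a" | "a' < a" | "a < a'" by linarith
  then show ?thesis
  proof cases
    case 1 then show ?thesis using A' by simp
  next
    case 2
    obtain d' where D: "{a, d'} \<in> \<pi>'" "a < d'" "\<phi>' {a, d'} = \<phi> {a, b}"
      using label_open[OF pp pp' eq ab] by blast
    consider "d' = b" | "b < d'" | "d' < b" by linarith
    then show ?thesis
    proof cases
      case 1 then show ?thesis using D by simp
    next
      case 2
      have "E (\<phi>' {a', b}) (\<phi>' {a, d'})"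
        using hom_cross[OF h' A'(1) D(1)] \<open>a' < a\<close> ab(2) 2 by blast
      then show ?thesis using A'(3) D(3) simple by simp
    next
      case 3
      then have "{a, d'} \<in> \<pi>" using IH D(1,2) by blast
      then have "{a, d'} = {a, b}" using pp_unique[OF pp _ ab(1), of "{a, d'}" a] by simp
      then have "d' = b" using pair_eq_less D(2) ab(2) by blast
      then show ?thesis using 3 by simp
    qed
  next
    case 3
    obtain d where D: "{a', d} \<in> \<pi>" "a' < d" "\<phi> {a', d} = \<phi>' {a', b}"
      using label_open[OF pp' pp eq' A'(1,2)] by blast
    consider "d = b" | "b < d" | "d < b" by linarith
    then show ?thesis
    proof cases
      case 1
      then have "{a', b} = {a, b}" using pp_unique[OF pp D(1) ab(1), of b] by simp
      then have "a' = a" using pair_eq_less A'(2) ab(2) by blast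
      then show ?thesis using \<open>a < a'\<close> by simp
    next
      case 2
      have "E (\<phi> {a, b}) (\<phi> {a', d})"
        using hom_cross[OF h ab(1) D(1)] \<open>a < a'\<close> A'(2) 2 by blast
      then show ?thesis using A'(3) D(3) simple by simp
    next
      case 3
      then have "{a', d} \<in> \<pi>'" using IH D(1,2) by blast
      then have "{a', d} = {a', b}" using pp_unique[OF pp' _ A'(1), of "{a', d}" a'] by simp
      then have "d = b" using pair_eq_less D(2) A'(2) by blast
      then show ?thesis using 3 by simp
    qed
  qed
qed

lemma decode:
  assumes simple: "\<forall>u. \<not> E u u"
    and pp: "\<pi> \<in> pair_partitions n" and pp': "\<pi>' \<in> pair_partitions n"
    and h: "\<phi> \<in> graph_homs L E \<pi>" and h': "\<phi>' \<in> graph_homs L E \<pi>'"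
    and eq: "\<And>j. j \<le> n \<Longrightarrow> Mo \<pi> \<phi> j = Mo \<pi>' \<phi>' j"
  shows "\<pi> = \<pi>' \<and> \<phi> = \<phi>'"
proof -
  have eq': "\<And>j. j \<le> n \<Longrightarrow> Mo \<pi>' \<phi>' j = Mo \<pi> \<phi> j" using eq by simp
  have key: "\<forall>a. a < b \<longrightarrow> ({a, b} \<in> \<pi> \<longleftrightarrow> {a, b} \<in> \<pi>')" for b
  proof (induction b rule: less_induct)
    case (less b)
    have IH1: "\<And>d a. d < b \<Longrightarrow> a < d \<Longrightarrow> ({a, d} \<in> \<pi> \<longleftrightarrow> {a, d} \<in> \<pi>')" using less.IH by simp
    have IH2: "\<And>d a. d < b \<Longrightarrow> a < d \<Longrightarrow> ({a, d} \<in> \<pi>' \<longleftrightarrow> {a, d} \<in> \<pi>)" using less.IH by simp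
    show ?case
    proof (intro allI impI iffI)
      fix a assume A: "a < b" "{a, b} \<in> \<pi>"
      show "{a, b} \<in> \<pi>'" by (rule decode_step[OF simple pp pp' h h' eq IH1 A(2) A(1)])
    next
      fix a assume A: "a < b" "{a, b} \<in> \<pi>'"
      show "{a, b} \<in> \<pi>" by (rule decode_step[OF simple pp' pp h' h eq' IH2 A(2) A(1)])
    qed
  qed
  have sub1: "\<pi> \<subseteq> \<pi>'"
  proof
    fix B assume "B \<in> \<pi>"
    then obtain a b where "B = {a, b}" "a < b" using pp_block[OF pp] by blast
    then show "B \<in> \<pi>'" using key[of b] \<open>B \<in> \<pi>\<close> by simp
  qed
  have sub2: "\<pi>' \<subseteq> \<pi>"
  proof
    fix B assume "B \<in> \<pi>'"
    then obtain a b where "B = {a, b}" "a < b" using pp_block[OF pp'] by blast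
    then show "B \<in> \<pi>" using key[of b] \<open>B \<in> \<pi>'\<close> by simp
  qed
  have pieq: "\<pi> = \<pi>'" using sub1 sub2 by blast
  have "\<phi> B = \<phi>' B" for B
  proof (cases "B \<in> \<pi>")
    case True
    then obtain a b where ab: "B = {a, b}" "a < b" using pp_block[OF pp] by blast
    have Bab: "{a, b} \<in> \<pi>" using True ab(1) by simp
    obtain b' where b': "{a, b'} \<in> \<pi>'" "a < b'" "\<phi>' {a, b'} = \<phi> {a, b}"
      using label_open[OF pp pp' eq Bab ab(2)] by blast
    have b'pi: "{a, b'} \<in> \<pi>" using b'(1) pieq by simp
    have "{a, b'} = {a, b}" by (rule pp_unique[OF pp b'pi Bab, of a]) simp_all
    then show ?thesis using b'(3) ab(1) by simp
  next
    case False
    have p1: "\<phi> \<in> \<pi> \<rightarrow>\<^sub>E {1..L}" using h unfolding graph_homs_def by simp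
    have p2: "\<phi>' \<in> \<pi> \<rightarrow>\<^sub>E {1..L}" using h' pieq unfolding graph_homs_def by simp
    show ?thesis using PiE_arb[OF p1 False] PiE_arb[OF p2 False] by simp
  qed
  then show ?thesis using pieq by (simp add: fun_eq_iff)
qed

theorem lemma3p3:
  fixes L p :: nat and E :: "nat \<Rightarrow> nat \<Rightarrow> bool"
  assumes "simple_graph_on L E" and "p \<ge> 1"
  shows "inj_on (Phi E p) (Pi2p L E p)"
proof (rule inj_onI)
  fix x y assume x: "x \<in> Pi2p L E p" and y: "y \<in> Pi2p L E p" and xy: "Phi E p x = Phi E p y"
  obtain \<pi> \<phi> where xe: "x = (\<pi>, \<phi>)" by (cases x)
  obtain \<pi>' \<phi>' where ye: "y = (\<pi>', \<phi>')" by (cases y)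
  obtain q where pq: "p = Suc q" using assms(2) by (cases p) auto
  have simple: "\<forall>u. \<not> E u u" using assms(1) unfolding simple_graph_on_def by blast
  have pp: "\<pi> \<in> pair_partitions (2 * Suc q)" and h: "\<phi> \<in> graph_homs L E \<pi>"
    using x xe pq unfolding Pi2p_def by auto
  have pp': "\<pi>' \<in> pair_partitions (2 * Suc q)" and h': "\<phi>' \<in> graph_homs L E \<pi>'"
    using y ye pq unfolding Pi2p_def by auto
  have peq: "PhiF E p \<pi> \<phi> k = PhiF E p \<pi>' \<phi>' k" if "1 \<le> k" "k \<le> 2 * p" for k
  proof -
    have "k \<in> set [1..<2 * p + 1]" using that by auto
    then show ?thesis using xy xe ye unfolding Phi_def map_eq_conv by auto
  qed
  have eq: "Mo \<pi> \<phi> j = Mo \<pi>' \<phi>' j" if "j \<le> 2 * Suc q" for j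
  proof (cases "j = 0")
    case True
    then show ?thesis using open_at_zero[OF pp] open_at_zero[OF pp'] unfolding Mo_def by simp
  next
    case False
    then have j: "1 \<le> j" "j \<le> 2 * Suc q" using that by auto
    obtain w where w: "PhiF E (Suc q) \<pi> \<phi> j = tr E w" "mset w = Mo \<pi> \<phi> j"
      using PhiF_mset[OF pp j] by blast
    obtain w' where w': "PhiF E (Suc q) \<pi>' \<phi>' j = tr E w'" "mset w' = Mo \<pi>' \<phi>' j"
      using PhiF_mset[OF pp' j] by blast
    have "tr E w = tr E w'" using w(1) w'(1) peq[of j] j pq by simp
    then show ?thesis using tr_eq_mset w(2) w'(2) by metis
  qed
  have "\<pi> = \<pi>' \<and> \<phi> = \<phi>'" using decode[OF simple pp pp' h h' eq] by blast
  then show "x = y" using xe ye by simp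
qed

end
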